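(* Let $Q\in\mathcal N$ be an intrinsic vanishing point and $z$ a local holomorphic coordinate with $z(Q)=0$ and metric $h(z,\bar z)dz\,d\bar z$. Expand $-\frac{h_z}{h}=c_0+c_1\bar z+c_2z+c_3z^2+c_4\bar z^2+c_5z\bar z+O(|z|^3)$, let $\gamma_1=-c_0/2$, and set $\nu_2=c_5-2\gamma_1c_1$, $\nu_3=c_4-c_1\bar\gamma_1$. Then $\nu_2=\nu_3=0$. Consequently the normal-form coordinate $w=z+\gamma_1z^2+\gamma_2z^3+\gamma_3z^4$ (with $\gamma_2,\gamma_3$ determined by $c_2+2\gamma_1c_0+6\gamma_2=0$, $12\gamma_3+c_3+2\gamma_1c_2+3\gamma_2c_0=0$) of a solution of the Schrödinger map flow satisfies $i\partial_tw+\partial_x^2w=c_1\bar w(\partial_xw)^2+O(|w|^3)(\partial_xw)^2$.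
   Context: $Q$ is an intrinsic vanishing point if $[\ln h]_z(0)[\ln h]_{z\bar z}(0)-[\ln h]_{z\bar zz}(0)=0$ (Wirtinger derivatives). In the coordinate $z$ the 1D Schrödinger map flow reads $i\partial_tz+\partial_x^2z=-\frac{h_z}{h}(\partial_xz)^2$ (convention $J=$ multiplication by $i$; the paper writes the right side with the opposite sign). *)

theory Defs
  imports "HOL-Analysis.Analysis"
begin

definition wirt_z :: "(complex \<Rightarrow> complex) \<Rightarrow> complex \<Rightarrow> complex" where
  "wirt_z f z = (frechet_derivative f (at z) 1 - \<i> * frechet_derivative f (at z) \<i>) / 2"

definition wirt_zb :: "(complex \<Rightarrow> complex) \<Rightarrow> complex \<Rightarrow> complex" where
  "wirt_zb f z = (frechet_derivative f (at z) 1 + \<i> * frechet_derivative f (at z) \<i>) / 2"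

fun Ck_on :: "nat \<Rightarrow> complex set \<Rightarrow> (complex \<Rightarrow> complex) \<Rightarrow> bool" where
  "Ck_on 0 S f = continuous_on S f"
| "Ck_on (Suc k) S f = ((\<forall>z\<in>S. f differentiable (at z)) \<and> Ck_on k S (wirt_z f) \<and> Ck_on k S (wirt_zb f))"

definition smooth_on :: "complex set \<Rightarrow> (complex \<Rightarrow> complex) \<Rightarrow> bool" where
  "smooth_on S f = (\<forall>k. Ck_on k S f)"

definition intrinsic_vanishing_at0 :: "(complex \<Rightarrow> real) \<Rightarrow> bool" where
  "intrinsic_vanishing_at0 h = (let L = (\<lambda>z. complex_of_real (ln (h z))) in
     wirt_z L 0 * wirt_zb (wirt_z L) 0 - wirt_z (wirt_zb (wirt_z L)) 0 = 0)"

definition pt :: "(real \<Rightarrow> real \<Rightarrow> complex) \<Rightarrow> real \<Rightarrow> real \<Rightarrow> complex" where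
  "pt u t x = vector_derivative (\<lambda>s. u s x) (at t)"

definition px :: "(real \<Rightarrow> real \<Rightarrow> complex) \<Rightarrow> real \<Rightarrow> real \<Rightarrow> complex" where
  "px u t x = vector_derivative (\<lambda>y. u t y) (at x)"

text \<open>u is a solution of the 1D Schroedinger map flow (in the coordinate z, J = multiplication
by i) on the open set U, with values in S:  i u_t + u_xx = -(h_z/h)(u) (u_x)^2.\<close>

definition SM_solution ::
  "(complex \<Rightarrow> real) \<Rightarrow> complex set \<Rightarrow> (real \<times> real) set \<Rightarrow> (real \<Rightarrow> real \<Rightarrow> complex) \<Rightarrow> bool" where
  "SM_solution h S U u = (open U \<and> (\<forall>(t,x)\<in>U. u t x \<in> S
      \<and> (\<lambda>s. u s x) differentiable (at t)
      \<and> (\<lambda>y. u t y) differentiable (at x)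
      \<and> (\<lambda>y. px u t y) differentiable (at x)
      \<and> \<i> * pt u t x + px (px u) t x
          = - (wirt_z (\<lambda>z. complex_of_real (h z)) (u t x) / complex_of_real (h (u t x)))
              * (px u t x)\<^sup>2))"

end

theory Submission
  imports Defs
begin

lemma lin_complex_decomp:
  fixes D :: "complex \<Rightarrow> complex"
  assumes lin: "linear D"
  shows "D v = (D 1 - \<i> * D \<i>) / 2 * v + (D 1 + \<i> * D \<i>) / 2 * cnj v"
proof -
  have "v = Re v *\<^sub>R 1 + Im v *\<^sub>R \<i>" by (simp add: complex_eq_iff)
  then have "D v = Re v *\<^sub>R D 1 + Im v *\<^sub>R D \<i>"
    by (metis lin linear_add linear_scale)
  also have "\<dots> = (D 1 - \<i> * D \<i>) / 2 * v + (D 1 + \<i> * D \<i>) / 2 * cnj v"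
  proof -
    have key: "\<And>x y a b. x *\<^sub>R a + y *\<^sub>R b = (a - \<i> * b) / 2 * (of_real x + \<i> * of_real y) + (a + \<i> * b) / 2 * (of_real x - \<i> * of_real y)"
      by (simp add: scaleR_conv_of_real field_simps)
    have v: "v = of_real (Re v) + \<i> * of_real (Im v)" by (simp add: complex_eq_iff)
    have cv: "cnj v = of_real (Re v) - \<i> * of_real (Im v)" by (simp add: complex_eq_iff)
    show ?thesis using key[of "Re v" "D 1" "Im v" "D \<i>"] unfolding v[symmetric] cv[symmetric] .
  qed
  finally show ?thesis .
qed

lemma wirt_hasderiv:
  assumes "f differentiable (at z)"
  shows "(f has_derivative (\<lambda>v. wirt_z f z * v + wirt_zb f z * cnj v)) (at z)"
proof -
  have d: "(f has_derivative frechet_derivative f (at z)) (at z)"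
    using assms frechet_derivative_works by blast
  have e: "frechet_derivative f (at z) = (\<lambda>v. wirt_z f z * v + wirt_zb f z * cnj v)"
    unfolding wirt_z_def wirt_zb_def
    by (rule ext, rule lin_complex_decomp[OF has_derivative_linear[OF d]])
  show ?thesis using d unfolding e .
qed

lemma wirt_unique:
  assumes "(f has_derivative (\<lambda>v. a * v + b * cnj v)) (at z)"
  shows "wirt_z f z = a" "wirt_zb f z = b"
proof -
  have e: "frechet_derivative f (at z) = (\<lambda>v. a * v + b * cnj v)"
    using frechet_derivative_at[OF assms] by simp
  show "wirt_z f z = a" unfolding wirt_z_def e by (simp add: algebra_simps)
  show "wirt_zb f z = b" unfolding wirt_zb_def e by (simp add: algebra_simps)
qed

lemma wirt_by:
  assumes "(f has_derivative D) (at z)" "\<And>v. D v = a * v + b * cnj v"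
  shows "wirt_z f z = a" "wirt_zb f z = b"
proof -
  have e: "D = (\<lambda>v. a * v + b * cnj v)" using assms(2) by (intro ext)
  have "(f has_derivative (\<lambda>v. a * v + b * cnj v)) (at z)"
    using assms(1) unfolding e .
  then show "wirt_z f z = a" "wirt_zb f z = b" using wirt_unique by auto
qed

lemma fd_local:
  assumes "open X" "z \<in> X" "\<And>x. x \<in> X \<Longrightarrow> f x = g x"
  shows "frechet_derivative f (at z) = frechet_derivative g (at z)"
proof -
  have "(f has_derivative D) (at z) \<longleftrightarrow> (g has_derivative D) (at z)" for D
    using has_derivative_transform_within_open[of f D z UNIV X g]
      has_derivative_transform_within_open[of g D z UNIV X f] assms by auto
  then show ?thesis unfolding frechet_derivative_def by simp
qed

lemma wirt_local:
  assumes "open X" "z \<in> X" "\<And>x. x \<in> X \<Longrightarrow> f x = g x"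
  shows "wirt_z f z = wirt_z g z" "wirt_zb f z = wirt_zb g z"
  unfolding wirt_z_def wirt_zb_def using fd_local[OF assms] by auto

lemma diff_local:
  assumes "open X" "z \<in> X" "\<And>x. x \<in> X \<Longrightarrow> f x = g x" "f differentiable (at z)"
  shows "g differentiable (at z)"
  using assms has_derivative_transform_within_open[of f _ z UNIV X g] unfolding differentiable_def
  by blast

lemma wirt_add:
  assumes "f differentiable (at z)" "g differentiable (at z)"
  shows "wirt_z (\<lambda>x. f x + g x) z = wirt_z f z + wirt_z g z"
    "wirt_zb (\<lambda>x. f x + g x) z = wirt_zb f z + wirt_zb g z"
  using wirt_by[OF has_derivative_add[OF wirt_hasderiv[OF assms(1)] wirt_hasderiv[OF assms(2)]], where a="wirt_z f z + wirt_z g z" and b="wirt_zb f z + wirt_zb g z"]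
  by (simp_all add: algebra_simps)

lemma wirt_mult:
  assumes "f differentiable (at z)" "g differentiable (at z)"
  shows "wirt_z (\<lambda>x. f x * g x) z = wirt_z f z * g z + f z * wirt_z g z"
    "wirt_zb (\<lambda>x. f x * g x) z = wirt_zb f z * g z + f z * wirt_zb g z"
  using wirt_by[OF has_derivative_mult[OF wirt_hasderiv[OF assms(1)] wirt_hasderiv[OF assms(2)]], where a="wirt_z f z * g z + f z * wirt_z g z" and b="wirt_zb f z * g z + f z * wirt_zb g z"]
  by (simp_all add: algebra_simps)

lemma wirt_const:
  shows "wirt_z (\<lambda>x. c) z = 0" "wirt_zb (\<lambda>x. c) z = 0"
  by (auto simp: wirt_z_def wirt_zb_def)

lemma wirt_neg:
  assumes "f differentiable (at z)"
  shows "wirt_z (\<lambda>x. - f x) z = - wirt_z f z" "wirt_zb (\<lambda>x. - f x) z = - wirt_zb f z"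
  using wirt_by[OF has_derivative_minus[OF wirt_hasderiv[OF assms(1)]], where a="- wirt_z f z" and b="- wirt_zb f z"]
  by (simp_all add: algebra_simps)

lemma wirt_inverse:
  assumes "f differentiable (at z)" "f z \<noteq> 0"
  shows "wirt_z (\<lambda>x. inverse (f x)) z = - (wirt_z f z * (inverse (f z) * inverse (f z)))"
    "wirt_zb (\<lambda>x. inverse (f x)) z = - (wirt_zb f z * (inverse (f z) * inverse (f z)))"
  using wirt_by[OF Deriv.has_derivative_inverse[OF assms(2) wirt_hasderiv[OF assms(1)]], where a="- (wirt_z f z * (inverse (f z) * inverse (f z)))" and b="- (wirt_zb f z * (inverse (f z) * inverse (f z)))"]
  by (simp_all add: algebra_simps)

lemma wirt_cnj:
  assumes "f differentiable (at z)"
  shows "wirt_z (\<lambda>x. cnj (f x)) z = cnj (wirt_zb f z)" "wirt_zb (\<lambda>x. cnj (f x)) z = cnj (wirt_z f z)"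
  using wirt_by[OF has_derivative_cnj[OF wirt_hasderiv[OF assms(1)]], where a="cnj (wirt_zb f z)" and b="cnj (wirt_z f z)"]
  by (simp_all add: algebra_simps)

lemma Ck_diff: "Ck_on (Suc k) S f \<Longrightarrow> z \<in> S \<Longrightarrow> f differentiable (at z)"
  by simp

lemma Ck_Suc_D: "Ck_on (Suc k) S f \<Longrightarrow> Ck_on k S (wirt_z f)" "Ck_on (Suc k) S f \<Longrightarrow> Ck_on k S (wirt_zb f)"
  by simp_all

lemma Ck_mono: "Ck_on (Suc k) S f \<Longrightarrow> Ck_on k S f"
proof (induction k arbitrary: f)
  case 0
  then have "\<forall>z\<in>S. f differentiable (at z)" by simp
  then have "\<forall>z\<in>S. isCont f z" by (metis differentiable_imp_continuous_within)
  then show ?case by (simp add: continuous_at_imp_continuous_on)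
next
  case (Suc k)
  have "Ck_on (Suc k) S (wirt_z f)" "Ck_on (Suc k) S (wirt_zb f)" "\<forall>z\<in>S. f differentiable (at z)"
    using Suc.prems by simp_all
  then have "Ck_on k S (wirt_z f)" "Ck_on k S (wirt_zb f)" "\<forall>z\<in>S. f differentiable (at z)"
    using Suc.IH by blast+
  then show ?case by (simp only: Ck_on.simps)
qed

lemma Ck_le: "k \<le> m \<Longrightarrow> Ck_on m S f \<Longrightarrow> Ck_on k S f"
proof (induction m)
  case 0 then show ?case by simp
next
  case (Suc m)
  show ?case
  proof (cases "k = Suc m")
    case True then show ?thesis using Suc.prems by simp
  next
    case False
    then have "k \<le> m" using Suc.prems by simp
    then show ?thesis using Suc.IH Suc.prems(2) Ck_mono by blast
  qed
qed

lemma Ck_cong: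
  assumes "open S" "Ck_on k S f" "\<And>z. z \<in> S \<Longrightarrow> f z = g z"
  shows "Ck_on k S g"
  using assms(3,2)
proof (induction k arbitrary: f g)
  case 0
  then have "continuous_on S f" by simp
  then show ?case using iffD1[OF continuous_on_cong[OF refl 0(1)]] by simp
next
  case (Suc k)
  have d: "\<forall>z\<in>S. g differentiable (at z)"
  proof
    fix z assume "z \<in> S"
    then show "g differentiable (at z)"
      using diff_local[OF assms(1) \<open>z \<in> S\<close> Suc.prems(1)] Suc.prems(2) \<open>z \<in> S\<close> by simp
  qed
  have e1: "wirt_z f z = wirt_z g z" if "z \<in> S" for z
    using wirt_local(1)[OF assms(1) that Suc.prems(1)] .
  have e2: "wirt_zb f z = wirt_zb g z" if "z \<in> S" for z
    using wirt_local(2)[OF assms(1) that Suc.prems(1)] .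
  have c1: "Ck_on k S (wirt_z f)" "Ck_on k S (wirt_zb f)" using Suc.prems(2) by simp_all
  have "Ck_on k S (wirt_z g)" by (rule Suc.IH[OF e1 c1(1)])
  moreover have "Ck_on k S (wirt_zb g)" by (rule Suc.IH[OF e2 c1(2)])
  ultimately show ?case using d by (simp only: Ck_on.simps)
qed

lemma Ck_const: "Ck_on k S (\<lambda>x. c)"
proof (induction k arbitrary: c)
  case 0 then show ?case by simp
next
  case (Suc k)
  have "wirt_z (\<lambda>x. c) = (\<lambda>x. 0)" "wirt_zb (\<lambda>x. c) = (\<lambda>x. 0)"
    by (auto simp: wirt_const)
  moreover have "\<forall>z\<in>S. (\<lambda>x. c) differentiable (at z)" by simp
  ultimately show ?case using Suc.IH[of 0] by (simp only: Ck_on.simps)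
qed

lemma Ck_add:
  assumes "open S"
  shows "Ck_on k S f \<Longrightarrow> Ck_on k S g \<Longrightarrow> Ck_on k S (\<lambda>x. f x + g x)"
proof (induction k arbitrary: f g)
  case 0 then show ?case by (auto intro: continuous_on_add)
next
  case (Suc k)
  have d: "\<forall>z\<in>S. (\<lambda>x. f x + g x) differentiable (at z)"
    using Suc.prems by auto
  have "Ck_on k S (\<lambda>x. wirt_z f x + wirt_z g x)" using Suc by auto
  then have 1: "Ck_on k S (wirt_z (\<lambda>x. f x + g x))"
    by (rule Ck_cong[OF assms]) (use Suc.prems wirt_add in auto)
  have "Ck_on k S (\<lambda>x. wirt_zb f x + wirt_zb g x)" using Suc by auto
  then have 2: "Ck_on k S (wirt_zb (\<lambda>x. f x + g x))"
    by (rule Ck_cong[OF assms]) (use Suc.prems wirt_add in auto)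
  show ?case using d 1 2 by simp
qed

lemma Ck_mult:
  assumes "open S"
  shows "Ck_on k S f \<Longrightarrow> Ck_on k S g \<Longrightarrow> Ck_on k S (\<lambda>x. f x * g x)"
proof (induction k arbitrary: f g)
  case 0 then show ?case by (auto intro: continuous_on_mult)
next
  case (Suc k)
  have d: "\<forall>z\<in>S. (\<lambda>x. f x * g x) differentiable (at z)"
    using Suc.prems by auto
  have f: "Ck_on k S f" and g: "Ck_on k S g" using Suc.prems Ck_mono by blast+
  have "Ck_on k S (\<lambda>x. wirt_z f x * g x + f x * wirt_z g x)"
    using Suc f g by (intro Ck_add[OF assms]) auto
  then have 1: "Ck_on k S (wirt_z (\<lambda>x. f x * g x))"
    by (rule Ck_cong[OF assms]) (use Suc.prems wirt_mult in auto)
  have "Ck_on k S (\<lambda>x. wirt_zb f x * g x + f x * wirt_zb g x)"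
    using Suc f g by (intro Ck_add[OF assms]) auto
  then have 2: "Ck_on k S (wirt_zb (\<lambda>x. f x * g x))"
    by (rule Ck_cong[OF assms]) (use Suc.prems wirt_mult in auto)
  show ?case using d 1 2 by simp
qed

lemma Ck_neg:
  assumes "open S" "Ck_on k S f"
  shows "Ck_on k S (\<lambda>x. - f x)"
  using Ck_mult[OF assms(1) Ck_const[of k S "-1"] assms(2)] by simp

lemma Ck_inverse:
  assumes "open S"
  shows "Ck_on k S f \<Longrightarrow> (\<forall>z\<in>S. f z \<noteq> 0) \<Longrightarrow> Ck_on k S (\<lambda>x. inverse (f x))"
proof (induction k arbitrary: f)
  case 0 then show ?case by (auto intro: continuous_on_inverse)
next
  case (Suc k)
  have d: "\<forall>z\<in>S. (\<lambda>x. inverse (f x)) differentiable (at z)"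
  proof
    fix z assume z: "z \<in> S"
    then have "f differentiable (at z)" "f z \<noteq> 0" using Suc.prems by auto
    then show "(\<lambda>x. inverse (f x)) differentiable (at z)"
      unfolding differentiable_def using Deriv.has_derivative_inverse by blast
  qed
  have f: "Ck_on k S f" using Suc.prems Ck_mono by blast
  have i: "Ck_on k S (\<lambda>x. inverse (f x))" using Suc.IH f Suc.prems by blast
  have "Ck_on k S (\<lambda>x. - (wirt_z f x * (inverse (f x) * inverse (f x))))"
    using Suc i by (intro Ck_neg[OF assms] Ck_mult[OF assms]) auto
  then have 1: "Ck_on k S (wirt_z (\<lambda>x. inverse (f x)))"
    by (rule Ck_cong[OF assms]) (use Suc.prems wirt_inverse in auto)
  have "Ck_on k S (\<lambda>x. - (wirt_zb f x * (inverse (f x) * inverse (f x))))"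
    using Suc i by (intro Ck_neg[OF assms] Ck_mult[OF assms]) auto
  then have 2: "Ck_on k S (wirt_zb (\<lambda>x. inverse (f x)))"
    by (rule Ck_cong[OF assms]) (use Suc.prems wirt_inverse in auto)
  show ?case using d 1 2 by simp
qed


lemma deriv_eps:
  assumes "g differentiable (at x)" "e > 0"
  shows "\<exists>d>0. \<forall>y. norm (y - x) < d \<longrightarrow> norm (g y - g x - (wirt_z g x * (y - x) + wirt_zb g x * cnj (y - x))) \<le> e * norm (y - x)"
  using wirt_hasderiv[OF assms(1)] assms(2) unfolding has_derivative_at_alt by blast

lemma onorm_wlin: "onorm (\<lambda>v. a * v + b * cnj v) \<le> norm a + norm b"
proof (rule onorm_le)
  fix v :: complex
  have "norm (a * v + b * cnj v) \<le> norm (a * v) + norm (b * cnj v)" by (rule norm_triangle_ineq)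
  also have "\<dots> = (norm a + norm b) * norm v" by (simp add: norm_mult distrib_right)
  finally show "norm (a * v + b * cnj v) \<le> (norm a + norm b) * norm v" .
qed

lemma shift_hasderiv:
  assumes "f differentiable (at (y + c))"
  shows "((\<lambda>y. f (y + c)) has_derivative (\<lambda>v. wirt_z f (y + c) * v + wirt_zb f (y + c) * cnj v)) (at y)"
proof -
  have t: "((\<lambda>y. y + c) has_derivative (\<lambda>v. v)) (at y)"
    by (auto intro!: derivative_eq_intros)
  show ?thesis
    using has_derivative_compose[OF t wirt_hasderiv[OF assms]] by simp
qed

lemma sym_core:
  assumes X: "open X" "x \<in> X" and df: "\<forall>y\<in>X. f differentiable (at y)"
    and dP: "wirt_z f differentiable (at x)" and dQ: "wirt_zb f differentiable (at x)"
    and v: "norm v = 1" and w: "norm w = 1" and e: "e > 0"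
  shows "\<exists>d>0. \<forall>s. 0 < s \<and> s < d \<longrightarrow>
     norm (f (x + of_real s * v + of_real s * w) - f (x + of_real s * v) - f (x + of_real s * w) + f x
       - (of_real s)^2 * ((wirt_z (wirt_z f) x * w + wirt_zb (wirt_z f) x * cnj w) * v
          + (wirt_z (wirt_zb f) x * w + wirt_zb (wirt_zb f) x * cnj w) * cnj v)) \<le> 6 * e * s^2"
proof -
  define P where "P = wirt_z f"
  define Q where "Q = wirt_zb f"
  define c1 where "c1 = wirt_z P x * w + wirt_zb P x * cnj w"
  define c2 where "c2 = wirt_z Q x * w + wirt_zb Q x * cnj w"
  obtain d1 where d1: "d1 > 0" "\<And>y. norm (y - x) < d1 \<Longrightarrow>
      norm (P y - P x - (wirt_z P x * (y - x) + wirt_zb P x * cnj (y - x))) \<le> e * norm (y - x)"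
    using deriv_eps[OF dP e] unfolding P_def by blast
  obtain d2 where d2: "d2 > 0" "\<And>y. norm (y - x) < d2 \<Longrightarrow>
      norm (Q y - Q x - (wirt_z Q x * (y - x) + wirt_zb Q x * cnj (y - x))) \<le> e * norm (y - x)"
    using deriv_eps[OF dQ e] unfolding Q_def by blast
  obtain r where r: "r > 0" "ball x r \<subseteq> X" using X open_contains_ball by blast
  define d where "d = min (min d1 d2) r / 3"
  have "d > 0" using d1 d2 r by (simp add: d_def)
  moreover have "norm (f (x + of_real s * v + of_real s * w) - f (x + of_real s * v) - f (x + of_real s * w) + f x
       - (of_real s)^2 * (c1 * v + c2 * cnj v)) \<le> 6 * e * s^2" if s: "0 < s" "s < d" for s
  proof -
    define \<sigma> where "\<sigma> = (of_real s :: complex)"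
    have cs: "cnj \<sigma> = \<sigma>" by (simp add: \<sigma>_def)
    have ns: "norm \<sigma> = s" using s by (simp add: \<sigma>_def)
    define \<psi> where "\<psi> y = f (y + \<sigma> * w) - f y - \<sigma> * (c1 * y + c2 * cnj y)" for y
    define S where "S = closed_segment x (x + \<sigma> * v)"
    have yS: "norm (y - x) \<le> s" if "y \<in> S" for y
      using segment_bound(1)[OF that[unfolded S_def]] by (simp add: norm_mult ns v)
    have yw: "norm (y + \<sigma> * w - x) \<le> 2 * s" if "y \<in> S" for y
    proof -
      have "norm (y + \<sigma> * w - x) \<le> norm (y - x) + norm (\<sigma> * w)"
        using norm_triangle_ineq[of "y - x" "\<sigma> * w"] by (simp add: algebra_simps)
      then show ?thesis using yS[OF that] by (simp add: norm_mult ns w)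
    qed
    have sd: "3 * s < d1" "3 * s < d2" "3 * s < r" using s by (auto simp: d_def)
    define \<alpha> where "\<alpha> y = P (y + \<sigma> * w) - P y - \<sigma> * c1" for y
    define \<beta> where "\<beta> y = Q (y + \<sigma> * w) - Q y - \<sigma> * c2" for y
    have der: "(\<psi> has_derivative (\<lambda>u. \<alpha> y * u + \<beta> y * cnj u)) (at y within S)" if y: "y \<in> S" for y
    proof -
      have inX1: "y + \<sigma> * w \<in> X" using yw[OF y] sd r by (auto simp: dist_norm norm_minus_commute)
      have inX2: "y \<in> X" using yS[OF y] sd r s by (auto simp: dist_norm norm_minus_commute)
      have h1: "((\<lambda>y. f (y + \<sigma> * w)) has_derivative (\<lambda>u. P (y + \<sigma> * w) * u + Q (y + \<sigma> * w) * cnj u)) (at y)"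
        using shift_hasderiv[of f y "\<sigma> * w"] df inX1 by (simp add: P_def Q_def)
      have h2: "(f has_derivative (\<lambda>u. P y * u + Q y * cnj u)) (at y)"
        using wirt_hasderiv[of f y] df inX2 by (simp add: P_def Q_def)
      have h3: "((\<lambda>y. \<sigma> * (c1 * y + c2 * cnj y)) has_derivative (\<lambda>u. \<sigma> * (c1 * u + c2 * cnj u))) (at y)"
        by (auto intro!: derivative_eq_intros)
      have "(\<psi> has_derivative (\<lambda>u. (P (y + \<sigma> * w) * u + Q (y + \<sigma> * w) * cnj u) - (P y * u + Q y * cnj u) - \<sigma> * (c1 * u + c2 * cnj u))) (at y)"
        unfolding \<psi>_def[abs_def] by (intro has_derivative_diff h1 h2 h3)
      then have "(\<psi> has_derivative (\<lambda>u. \<alpha> y * u + \<beta> y * cnj u)) (at y)"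
        by (rule has_derivative_eq_rhs) (auto simp: \<alpha>_def \<beta>_def algebra_simps)
      then show ?thesis by (rule has_derivative_at_withinI)
    qed
    have bnd: "onorm (\<lambda>u. \<alpha> y * u + \<beta> y * cnj u) \<le> 6 * e * s" if y: "y \<in> S" for y
    proof -
      have n1: "norm (y + \<sigma> * w - x) < d1" "norm (y - x) < d1" "norm (y + \<sigma> * w - x) < d2" "norm (y - x) < d2"
        using yw[OF y] yS[OF y] sd s by auto
      define E1 where "E1 = P (y + \<sigma> * w) - P x - (wirt_z P x * (y + \<sigma> * w - x) + wirt_zb P x * cnj (y + \<sigma> * w - x))"
      define E2 where "E2 = P y - P x - (wirt_z P x * (y - x) + wirt_zb P x * cnj (y - x))"
      define E3 where "E3 = Q (y + \<sigma> * w) - Q x - (wirt_z Q x * (y + \<sigma> * w - x) + wirt_zb Q x * cnj (y + \<sigma> * w - x))"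
      define E4 where "E4 = Q y - Q x - (wirt_z Q x * (y - x) + wirt_zb Q x * cnj (y - x))"
      have a: "\<alpha> y = E1 - E2" unfolding \<alpha>_def E1_def E2_def c1_def using cs
        by (simp add: algebra_simps)
      have b: "\<beta> y = E3 - E4" unfolding \<beta>_def E3_def E4_def c2_def using cs
        by (simp add: algebra_simps)
      have "norm E1 \<le> e * (2 * s)" using d1(2)[OF n1(1)] yw[OF y] e unfolding E1_def
        by (meson mult_left_mono less_imp_le order_trans)
      moreover have "norm E2 \<le> e * s" using d1(2)[OF n1(2)] yS[OF y] e unfolding E2_def
        by (meson mult_left_mono less_imp_le order_trans)
      moreover have "norm E3 \<le> e * (2 * s)" using d2(2)[OF n1(3)] yw[OF y] e unfolding E3_def
        by (meson mult_left_mono less_imp_le order_trans)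
      moreover have "norm E4 \<le> e * s" using d2(2)[OF n1(4)] yS[OF y] e unfolding E4_def
        by (meson mult_left_mono less_imp_le order_trans)
      ultimately have "norm (\<alpha> y) + norm (\<beta> y) \<le> 6 * e * s"
        unfolding a b using norm_triangle_ineq4[of E1 E2] norm_triangle_ineq4[of E3 E4] by linarith
      then show ?thesis using onorm_wlin[of "\<alpha> y" "\<beta> y"] by linarith
    qed
    have cS: "convex S" "x \<in> S" "x + \<sigma> * v \<in> S" unfolding S_def by auto
    have "norm (\<psi> (x + \<sigma> * v) - \<psi> x) \<le> 6 * e * s * norm (x + \<sigma> * v - x)"
      by (rule differentiable_bound[OF cS(1) der bnd cS(3) cS(2)])
    also have "\<dots> = 6 * e * s^2" by (simp add: norm_mult ns v power2_eq_square)
    finally have *: "norm (\<psi> (x + \<sigma> * v) - \<psi> x) \<le> 6 * e * s^2" .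
    have "\<psi> (x + \<sigma> * v) - \<psi> x = f (x + \<sigma> * v + \<sigma> * w) - f (x + \<sigma> * v) - f (x + \<sigma> * w) + f x - \<sigma>^2 * (c1 * v + c2 * cnj v)"
      unfolding \<psi>_def using cs by (simp add: algebra_simps power2_eq_square)
    then show ?thesis using * by (simp add: \<sigma>_def)
  qed
  ultimately show ?thesis unfolding c1_def c2_def P_def Q_def by blast
qed

lemma small_zero: "(\<And>e. e > 0 \<Longrightarrow> norm (z::complex) \<le> e) \<Longrightarrow> z = 0"
proof (rule ccontr)
  assume h: "\<And>e. e > 0 \<Longrightarrow> norm z \<le> e" and "z \<noteq> 0"
  then have "norm z > 0" by simp
  then have "norm z \<le> norm z / 2" using h[of "norm z / 2"] by simp
  then show False using \<open>norm z > 0\<close> by simp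
qed

lemma wirt_sym:
  assumes X: "open X" "x \<in> X" and df: "\<forall>y\<in>X. f differentiable (at y)"
    and dP: "wirt_z f differentiable (at x)" and dQ: "wirt_zb f differentiable (at x)"
  shows "wirt_zb (wirt_z f) x = wirt_z (wirt_zb f) x"
proof -
  define A where "A w v = (wirt_z (wirt_z f) x * w + wirt_zb (wirt_z f) x * cnj w) * v
          + (wirt_z (wirt_zb f) x * w + wirt_zb (wirt_zb f) x * cnj w) * cnj v" for w v
  define D where "D s v w = f (x + of_real s * v + of_real s * w) - f (x + of_real s * v) - f (x + of_real s * w) + f x" for s v w
  have Dsym: "D s v w = D s w v" for s v w unfolding D_def by (simp add: algebra_simps)
  have "norm (A \<i> 1 - A 1 \<i>) \<le> e" if e: "e > 0" for e
  proof -
    have e': "e / 12 > 0" using e by simp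
    obtain d1 where d1: "d1 > 0" "\<And>s. 0 < s \<and> s < d1 \<Longrightarrow> norm (D s 1 \<i> - (of_real s)^2 * A \<i> 1) \<le> 6 * (e/12) * s^2"
      using sym_core[OF X df dP dQ _ _ e', of 1 \<i>] unfolding A_def D_def by auto
    obtain d2 where d2: "d2 > 0" "\<And>s. 0 < s \<and> s < d2 \<Longrightarrow> norm (D s \<i> 1 - (of_real s)^2 * A 1 \<i>) \<le> 6 * (e/12) * s^2"
      using sym_core[OF X df dP dQ _ _ e', of \<i> 1] unfolding A_def D_def by auto
    define s where "s = min d1 d2 / 2"
    have s: "0 < s" "s < d1" "s < d2" using d1 d2 by (auto simp: s_def)
    have eq: "(of_real s)^2 * (A \<i> 1 - A 1 \<i>) = (D s \<i> 1 - (of_real s)^2 * A 1 \<i>) - (D s 1 \<i> - (of_real s)^2 * A \<i> 1)"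
      using Dsym[of s 1 \<i>] by (simp add: algebra_simps)
    have "norm ((of_real s)^2 * (A \<i> 1 - A 1 \<i>)) \<le> norm (D s 1 \<i> - (of_real s)^2 * A \<i> 1) + norm (D s \<i> 1 - (of_real s)^2 * A 1 \<i>)"
      unfolding eq using norm_triangle_ineq4[of "D s \<i> 1 - (of_real s)^2 * A 1 \<i>" "D s 1 \<i> - (of_real s)^2 * A \<i> 1"]
      by simp
    also have "\<dots> \<le> e * s^2" using d1(2)[of s] d2(2)[of s] s by simp
    finally have "s^2 * norm (A \<i> 1 - A 1 \<i>) \<le> s^2 * e" by (simp add: norm_mult norm_power mult.commute)
    then show ?thesis using s by simp
  qed
  then have "A \<i> 1 - A 1 \<i> = 0" by (rule small_zero)
  then show ?thesis unfolding A_def by (simp add: algebra_simps)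
qed

lemma wirt_taylor2:
  assumes r: "r > 0" and df: "\<forall>y\<in>ball 0 r. f differentiable (at y)"
    and dP: "wirt_z f differentiable (at 0)" and dQ: "wirt_zb f differentiable (at 0)" and e: "e > 0"
  shows "\<exists>d>0. \<forall>z. norm z < d \<longrightarrow> norm (f z - (f 0 + wirt_z f 0 * z + wirt_zb f 0 * cnj z
      + (wirt_z (wirt_z f) 0 * (z * z) + 2 * wirt_zb (wirt_z f) 0 * (z * cnj z) + wirt_zb (wirt_zb f) 0 * (cnj z * cnj z)) / 2))
      \<le> e * (norm z)^2"
proof -
  define P where "P = wirt_z f"
  define Q where "Q = wirt_zb f"
  have sym: "wirt_zb P 0 = wirt_z Q 0"
    unfolding P_def Q_def by (rule wirt_sym[OF _ _ df dP dQ]) (use r in auto)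
  define a where "a = wirt_z P 0"
  define m where "m = wirt_zb P 0"
  define b where "b = wirt_zb Q 0"
  have e2: "e / 2 > 0" using e by simp
  obtain d1 where d1: "d1 > 0" "\<And>y. norm (y - 0) < d1 \<Longrightarrow>
      norm (P y - P 0 - (wirt_z P 0 * (y - 0) + wirt_zb P 0 * cnj (y - 0))) \<le> e/2 * norm (y - 0)"
    using deriv_eps[OF dP e2] unfolding P_def by blast
  obtain d2 where d2: "d2 > 0" "\<And>y. norm (y - 0) < d2 \<Longrightarrow>
      norm (Q y - Q 0 - (wirt_z Q 0 * (y - 0) + wirt_zb Q 0 * cnj (y - 0))) \<le> e/2 * norm (y - 0)"
    using deriv_eps[OF dQ e2] unfolding Q_def by blast
  define d where "d = min r (min d1 d2)"
  have "d > 0" using r d1 d2 by (simp add: d_def)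
  moreover have "norm (f z - (f 0 + P 0 * z + Q 0 * cnj z + (a * (z * z) + 2 * m * (z * cnj z) + b * (cnj z * cnj z)) / 2))
      \<le> e * (norm z)^2" if z: "norm z < d" for z
  proof -
    define T where "T y = f 0 + P 0 * y + Q 0 * cnj y + (a * (y * y) + 2 * m * (y * cnj y) + b * (cnj y * cnj y)) / 2" for y
    define R where "R y = f y - T y" for y
    define S where "S = cball (0::complex) (norm z)"
    define \<alpha> where "\<alpha> y = P y - P 0 - a * y - m * cnj y" for y
    define \<beta> where "\<beta> y = Q y - Q 0 - m * y - b * cnj y" for y
    have yS: "norm y \<le> norm z" if "y \<in> S" for y using that by (simp add: S_def)
    have der: "(R has_derivative (\<lambda>u. \<alpha> y * u + \<beta> y * cnj u)) (at y within S)" if y: "y \<in> S" for y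
    proof -
      have "y \<in> ball 0 r" using yS[OF y] z by (auto simp: d_def)
      then have h1: "(f has_derivative (\<lambda>u. P y * u + Q y * cnj u)) (at y)"
        using wirt_hasderiv[of f y] df by (simp add: P_def Q_def)
      have h2: "(T has_derivative (\<lambda>u. P 0 * u + Q 0 * cnj u + (a * (u * y + y * u) + 2 * m * (u * cnj y + y * cnj u) + b * (cnj u * cnj y + cnj y * cnj u)) / 2)) (at y)"
        unfolding T_def[abs_def] by (auto intro!: derivative_eq_intros)
      have "(R has_derivative (\<lambda>u. (P y * u + Q y * cnj u) - (P 0 * u + Q 0 * cnj u + (a * (u * y + y * u) + 2 * m * (u * cnj y + y * cnj u) + b * (cnj u * cnj y + cnj y * cnj u)) / 2))) (at y)"
        unfolding R_def[abs_def] by (intro has_derivative_diff h1 h2)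
      then have "(R has_derivative (\<lambda>u. \<alpha> y * u + \<beta> y * cnj u)) (at y)"
        by (rule has_derivative_eq_rhs) (auto simp: \<alpha>_def \<beta>_def sym[folded m_def] field_simps)
      then show ?thesis by (rule has_derivative_at_withinI)
    qed
    have bnd: "onorm (\<lambda>u. \<alpha> y * u + \<beta> y * cnj u) \<le> e * norm z" if y: "y \<in> S" for y
    proof -
      have n: "norm (y - 0) < d1" "norm (y - 0) < d2" using yS[OF y] z by (auto simp: d_def)
      have "norm (\<alpha> y) \<le> e/2 * norm y" using d1(2)[OF n(1)] by (simp add: \<alpha>_def a_def m_def algebra_simps)
      moreover have "norm (\<beta> y) \<le> e/2 * norm y" using d2(2)[OF n(2)] sym
        by (simp add: \<beta>_def b_def m_def algebra_simps)
      moreover have "e/2 * norm y \<le> e/2 * norm z" using yS[OF y] e by (intro mult_left_mono) auto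
      ultimately have "norm (\<alpha> y) + norm (\<beta> y) \<le> e * norm z"
        by linarith
      then show ?thesis using onorm_wlin[of "\<alpha> y" "\<beta> y"] by linarith
    qed
    have cS: "convex S" "0 \<in> S" "z \<in> S" unfolding S_def by auto
    have "norm (R z - R 0) \<le> e * norm z * norm (z - 0)"
      by (rule differentiable_bound[OF cS(1) der bnd cS(3) cS(2)])
    moreover have "R 0 = 0" by (simp add: R_def T_def)
    ultimately show ?thesis by (simp add: R_def T_def power2_eq_square mult.assoc)
  qed
  ultimately show ?thesis unfolding P_def Q_def a_def m_def b_def by blast
qed


lemma lin_small_zero:
  assumes "d > 0" "\<And>t. 0 < t \<Longrightarrow> t < d \<Longrightarrow> norm (x::complex) \<le> K * t"
  shows "x = 0"
proof (rule small_zero)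
  fix e :: real assume e: "e > 0"
  define t where "t = min (d/2) (e / (2 * (\<bar>K\<bar> + 1)))"
  have t: "0 < t" "t < d" using assms(1) e by (auto simp: t_def)
  have "norm x \<le> K * t" using assms(2)[OF t] .
  also have "\<dots> \<le> \<bar>K\<bar> * t" using t by (simp add: mult_right_mono)
  also have "\<dots> \<le> (\<bar>K\<bar> + 1) * (e / (2 * (\<bar>K\<bar> + 1)))"
    by (intro mult_mono) (use t in \<open>auto simp: t_def\<close>)
  also have "\<dots> \<le> e" using e by (simp add: field_simps)
  finally show "norm x \<le> e" .
qed

lemma quad_zero:
  fixes a b c :: complex
  assumes H: "\<And>e. e > 0 \<Longrightarrow> \<exists>d>0. \<forall>t. 0 < t \<and> t < d \<longrightarrow> norm (a + b * of_real t + c * (of_real t)^2) \<le> e * t^2"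
  shows "a = 0 \<and> b = 0 \<and> c = 0"
proof -
  obtain d where d: "d > 0" "\<And>t. 0 < t \<and> t < d \<Longrightarrow> norm (a + b * of_real t + c * (of_real t)^2) \<le> 1 * t^2"
    using H[of 1] by auto
  have a: "a = 0"
  proof (rule lin_small_zero[of "min d 1" a "1 + norm b + norm c"])
    show "min d 1 > 0" using d by simp
    fix t :: real assume t: "0 < t" "t < min d 1"
    have "norm a \<le> norm (a + b * of_real t + c * (of_real t)^2) + norm (b * of_real t) + norm (c * (of_real t)^2)"
    proof -
      define X where "X = b * of_real t"
      define Y where "Y = c * (of_real t :: complex)^2"
      have "norm a = norm ((a + X + Y) - X - Y)" by simp
      also have "\<dots> \<le> norm ((a + X + Y) - X) + norm Y" by (rule norm_triangle_ineq4)
      also have "\<dots> \<le> norm (a + X + Y) + norm X + norm Y" using norm_triangle_ineq4[of "a + X + Y" X] by simp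
      finally show ?thesis unfolding X_def Y_def .
    qed
    also have "\<dots> \<le> t^2 + norm b * t + norm c * t^2"
      using d(2)[of t] t by (simp add: norm_mult norm_power)
    also have "\<dots> \<le> t + norm b * t + norm c * t"
    proof -
      have "t^2 \<le> t" using t by (simp add: power2_eq_square mult_left_le)
      moreover have "norm c * t^2 \<le> norm c * t" using \<open>t^2 \<le> t\<close> by (simp add: mult_left_mono)
      ultimately show ?thesis by linarith
    qed
    also have "\<dots> = (1 + norm b + norm c) * t" by (simp add: algebra_simps)
    finally show "norm a \<le> (1 + norm b + norm c) * t" .
  qed
  have b: "b = 0"
  proof (rule lin_small_zero[of d b "1 + norm c"])
    show "d > 0" using d by simp
    fix t :: real assume t: "0 < t" "t < d"
    have "norm (b * of_real t + c * (of_real t)^2) \<le> t^2" using d(2)[of t] t a by simp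
    moreover have "b * of_real t + c * (of_real t)^2 = of_real t * (b + c * of_real t)"
      by (simp add: algebra_simps power2_eq_square)
    ultimately have "t * norm (b + c * of_real t) \<le> t * t" using t by (simp add: norm_mult power2_eq_square)
    then have "norm (b + c * of_real t) \<le> t" using t by simp
    then have "norm b \<le> t + norm c * t"
      using norm_triangle_ineq4[of "b + c * of_real t" "c * of_real t"] t by (simp add: norm_mult)
    then show "norm b \<le> (1 + norm c) * t" by (simp add: algebra_simps)
  qed
  have c: "c = 0"
  proof (rule small_zero)
    fix e :: real assume e: "e > 0"
    obtain d' where d': "d' > 0" "\<And>t. 0 < t \<and> t < d' \<Longrightarrow> norm (a + b * of_real t + c * (of_real t)^2) \<le> e * t^2"
      using H[OF e] by auto
    define t where "t = d'/2"
    have t: "0 < t" "t < d'" using d' by (auto simp: t_def)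
    have "norm c * t^2 \<le> e * t^2" using d'(2)[OF conjI[OF t]] a b by (simp add: norm_mult norm_power)
    then show "norm c \<le> e" using t by simp
  qed
  show ?thesis using a b c by simp
qed


lemma real_wirt:
  assumes "open X" "z \<in> X" "\<And>x. x \<in> X \<Longrightarrow> cnj (f x) = f x" "f differentiable (at z)"
  shows "wirt_zb f z = cnj (wirt_z f z)"
proof -
  have "wirt_zb f z = wirt_zb (\<lambda>x. cnj (f x)) z"
    using wirt_local(2)[OF assms(1,2), of f "\<lambda>x. cnj (f x)"] assms(3) by simp
  also have "\<dots> = cnj (wirt_z f z)" by (rule wirt_cnj[OF assms(4)])
  finally show ?thesis .
qed

lemma wirt_ln:
  fixes h :: "complex \<Rightarrow> real"
  assumes X: "open X" "z \<in> X" and hp: "h z > 0"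
    and dH: "(\<lambda>x. complex_of_real (h x)) differentiable (at z)"
  shows "((\<lambda>x. complex_of_real (ln (h x))) has_derivative
          (\<lambda>v. (wirt_z (\<lambda>x. complex_of_real (h x)) z / complex_of_real (h z)) * v
             + (wirt_zb (\<lambda>x. complex_of_real (h x)) z / complex_of_real (h z)) * cnj v)) (at z)"
proof -
  define H where "H = (\<lambda>x. complex_of_real (h x))"
  define a where "a = wirt_z H z"
  have rb: "wirt_zb H z = cnj a"
    unfolding a_def H_def by (rule real_wirt[OF X _ dH]) simp
  have dH': "(H has_derivative (\<lambda>v. a * v + cnj a * cnj v)) (at z)"
    using wirt_hasderiv[OF dH[folded H_def]] rb a_def by simp
  have dh: "(h has_derivative (\<lambda>v. Re (a * v + cnj a * cnj v))) (at z)"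
    using has_derivative_Re[OF dH'] by (simp add: H_def)
  have dln: "((\<lambda>x. ln (h x)) has_derivative (\<lambda>v. inverse (h z) * Re (a * v + cnj a * cnj v))) (at z)"
    using has_derivative_compose[OF dh DERIV_ln[OF hp, unfolded has_field_derivative_def]]
    by (simp add: mult.commute)
  have dL: "((\<lambda>x. complex_of_real (ln (h x))) has_derivative (\<lambda>v. of_real (inverse (h z) * Re (a * v + cnj a * cnj v)))) (at z)"
    using has_derivative_of_real[OF dln] .
  have re: "complex_of_real (Re (a * v + cnj a * cnj v)) = a * v + cnj a * cnj v" for v
    by (simp add: complex_eq_iff)
  have e: "of_real (inverse (h z) * Re (a * v + cnj a * cnj v)) = (a / H z) * v + (cnj a / H z) * cnj v" for v
  proof -
    have "of_real (inverse (h z) * Re (a * v + cnj a * cnj v)) = inverse (of_real (h z)) * (a * v + cnj a * cnj v)"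
      by (simp only: of_real_mult re of_real_inverse)
    then show ?thesis by (simp add: H_def divide_inverse algebra_simps)
  qed
  show ?thesis
    apply (rule has_derivative_eq_rhs[OF dL])
    apply (rule ext)
    using e rb a_def unfolding H_def by simp
qed

lemma poly2_coeffs:
  fixes A B C D E G :: complex
  assumes H: "\<And>e. e > 0 \<Longrightarrow> \<exists>d>0. \<forall>z. norm z < d \<longrightarrow>
     norm (A + B * cnj z + C * z + D * (z * z) + E * (cnj z * cnj z) + G * (z * cnj z)) \<le> e * (norm z)^2"
  shows "A = 0 \<and> B = 0 \<and> C = 0 \<and> D = 0 \<and> E = 0 \<and> G = 0"
proof -
  have q: "A = 0 \<and> B * cnj v + C * v = 0 \<and> D * (v * v) + E * (cnj v * cnj v) + G * (v * cnj v) = 0"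
    if v: "v \<noteq> 0" for v
  proof (rule quad_zero)
    fix e :: real assume e: "e > 0"
    have nv: "norm v > 0" using v by simp
    have "e / (norm v)^2 > 0" using e nv by simp
    from H[OF this] obtain d where d: "d > 0" "\<And>z. norm z < d \<Longrightarrow>
      norm (A + B * cnj z + C * z + D * (z * z) + E * (cnj z * cnj z) + G * (z * cnj z)) \<le> e / (norm v)^2 * (norm z)^2"
      by blast
    show "\<exists>d>0. \<forall>t. 0 < t \<and> t < d \<longrightarrow> norm (A + (B * cnj v + C * v) * of_real t
        + (D * (v * v) + E * (cnj v * cnj v) + G * (v * cnj v)) * (of_real t)^2) \<le> e * t^2"
    proof (intro exI[of _ "d / norm v"] conjI allI impI)
      show "d / norm v > 0" using d nv by simp
      fix t :: real assume t: "0 < t \<and> t < d / norm v"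
      define z where "z = of_real t * v"
      have nz: "norm z = t * norm v" using t by (simp add: z_def norm_mult)
      have "norm z < d" using t nv by (simp add: nz field_simps)
      note dd = d(2)[OF this]
      have eq: "A + (B * cnj v + C * v) * of_real t + (D * (v * v) + E * (cnj v * cnj v) + G * (v * cnj v)) * (of_real t)^2
          = A + B * cnj z + C * z + D * (z * z) + E * (cnj z * cnj z) + G * (z * cnj z)"
        by (simp add: z_def algebra_simps power2_eq_square)
      have "e / (norm v)^2 * (norm z)^2 = e * t^2" using nv by (simp add: nz field_simps power2_eq_square)
      then show "norm (A + (B * cnj v + C * v) * of_real t
        + (D * (v * v) + E * (cnj v * cnj v) + G * (v * cnj v)) * (of_real t)^2) \<le> e * t^2"
        using dd unfolding eq by simp
    qed
  qed
  have q1: "A = 0" "B + C = 0" "D + E + G = 0" using q[of 1] by auto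
  have q2: "B * (- \<i>) + C * \<i> = 0" "- D - E + G = 0" using q[of \<i>] by (auto simp: algebra_simps)
  have ni: "1 + \<i> \<noteq> 0" by (simp add: complex_eq_iff)
  have q3: "G * 2 + \<i> * (D * 2) = \<i> * (E * 2)" using q[OF ni]
    by (auto simp: algebra_simps)
  have "C = B" using q2(1) by (simp add: algebra_simps)
  then have BC: "B = 0" "C = 0" using q1(2) by auto
  have "2 * G = (D + E + G) + (- D - E + G)" by (simp add: algebra_simps)
  then have G: "G = 0" using q1(3) q2(2) by simp
  have DE: "D = E" using q3 G by simp
  have "D = 0" using q1(3) G DE by simp
  then show ?thesis using q1 BC G DE by simp
qed


lemma nu_zero:
  fixes h :: "complex \<Rightarrow> real" and S :: "complex set"
    and c0 c1 c2 c3 c4 c5 \<gamma>1 :: complex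
  assumes S_open: "open S" and S0: "0 \<in> S"
    and h_pos: "\<forall>z\<in>S. h z > 0"
    and h_smooth: "smooth_on S (\<lambda>z. complex_of_real (h z))"
    and Q: "intrinsic_vanishing_at0 h"
    and expansion: "\<exists>C \<delta>. \<delta> > 0 \<and> (\<forall>z. norm z < \<delta> \<longrightarrow>
        norm (- wirt_z (\<lambda>z. complex_of_real (h z)) z / complex_of_real (h z)
              - (c0 + c1 * cnj z + c2 * z + c3 * z\<^sup>2 + c4 * (cnj z)\<^sup>2 + c5 * z * cnj z))
          \<le> C * norm z ^ 3)"
    and g1: "\<gamma>1 = - c0 / 2"
  shows "c5 - 2 * \<gamma>1 * c1 = 0 \<and> c4 - c1 * cnj \<gamma>1 = 0"
proof -
  define H where "H = (\<lambda>z. complex_of_real (h z))"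
  define F where "F = (\<lambda>z. - wirt_z H z / H z)"
  define L where "L = (\<lambda>z. complex_of_real (ln (h z)))"
  have H3: "Ck_on 3 S H" using h_smooth unfolding smooth_on_def H_def by blast
  have Hnz: "\<forall>z\<in>S. H z \<noteq> 0" using h_pos by (force simp: H_def)
  have H2: "Ck_on 2 S H" using Ck_le[of 2 3] H3 by simp
  have Hz2: "Ck_on 2 S (wirt_z H)" using H3 by (simp add: numeral_3_eq_3 numeral_2_eq_2)
  have dH: "\<forall>y\<in>S. H differentiable (at y)" using H3 by (simp add: numeral_3_eq_3)
  have F2': "Ck_on 2 S (\<lambda>z. - (wirt_z H z * inverse (H z)))"
    by (intro Ck_neg[OF S_open] Ck_mult[OF S_open] Hz2 Ck_inverse[OF S_open H2 Hnz])
  have F2: "Ck_on 2 S F" by (rule Ck_cong[OF S_open F2']) (simp add: F_def divide_inverse)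
  have dF: "\<forall>y\<in>S. F differentiable (at y)" using F2 by (simp add: numeral_2_eq_2)
  have dFz: "\<forall>y\<in>S. wirt_z F differentiable (at y)" using F2 by (simp add: numeral_2_eq_2)
  have dFzb: "\<forall>y\<in>S. wirt_zb F differentiable (at y)" using F2 by (simp add: numeral_2_eq_2)
  obtain r where r: "r > 0" "ball 0 r \<subseteq> S" using S_open S0 open_contains_ball by blast
  obtain C \<delta> where C: "\<delta> > 0" "\<And>z. norm z < \<delta> \<Longrightarrow>
      norm (F z - (c0 + c1 * cnj z + c2 * z + c3 * z\<^sup>2 + c4 * (cnj z)\<^sup>2 + c5 * z * cnj z)) \<le> C * norm z ^ 3"
    using expansion unfolding F_def H_def by blast
  have coef: "F 0 - c0 = 0 \<and> wirt_zb F 0 - c1 = 0 \<and> wirt_z F 0 - c2 = 0 \<and> wirt_z (wirt_z F) 0 / 2 - c3 = 0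
     \<and> wirt_zb (wirt_zb F) 0 / 2 - c4 = 0 \<and> wirt_zb (wirt_z F) 0 - c5 = 0"
  proof (rule poly2_coeffs)
    fix e :: real assume e: "e > 0"
    have e2: "e / 2 > 0" using e by simp
    obtain d1 where d1: "d1 > 0" "\<And>z. norm z < d1 \<Longrightarrow> norm (F z - (F 0 + wirt_z F 0 * z + wirt_zb F 0 * cnj z
      + (wirt_z (wirt_z F) 0 * (z * z) + 2 * wirt_zb (wirt_z F) 0 * (z * cnj z) + wirt_zb (wirt_zb F) 0 * (cnj z * cnj z)) / 2))
      \<le> e / 2 * (norm z)^2"
      using wirt_taylor2[OF r(1) _ _ _ e2, of F] dF dFz dFzb r S0 by blast
    define d where "d = min d1 (min \<delta> (e / (2 * (\<bar>C\<bar> + 1))))"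
    show "\<exists>d>0. \<forall>z. norm z < d \<longrightarrow> norm ((F 0 - c0) + (wirt_zb F 0 - c1) * cnj z + (wirt_z F 0 - c2) * z
       + (wirt_z (wirt_z F) 0 / 2 - c3) * (z * z) + (wirt_zb (wirt_zb F) 0 / 2 - c4) * (cnj z * cnj z)
       + (wirt_zb (wirt_z F) 0 - c5) * (z * cnj z)) \<le> e * (norm z)^2"
    proof (intro exI[of _ d] conjI allI impI)
      show "d > 0" using d1 C e by (simp add: d_def)
      fix z :: complex assume z: "norm z < d"
      define T where "T = F 0 + wirt_z F 0 * z + wirt_zb F 0 * cnj z
        + (wirt_z (wirt_z F) 0 * (z * z) + 2 * wirt_zb (wirt_z F) 0 * (z * cnj z) + wirt_zb (wirt_zb F) 0 * (cnj z * cnj z)) / 2"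
      define Pe where "Pe = c0 + c1 * cnj z + c2 * z + c3 * z\<^sup>2 + c4 * (cnj z)\<^sup>2 + c5 * z * cnj z"
      have eq: "(F 0 - c0) + (wirt_zb F 0 - c1) * cnj z + (wirt_z F 0 - c2) * z
       + (wirt_z (wirt_z F) 0 / 2 - c3) * (z * z) + (wirt_zb (wirt_zb F) 0 / 2 - c4) * (cnj z * cnj z)
       + (wirt_zb (wirt_z F) 0 - c5) * (z * cnj z) = (F z - Pe) - (F z - T)"
        unfolding T_def Pe_def by (simp add: algebra_simps power2_eq_square add_divide_distrib)
      have b1: "norm (F z - T) \<le> e / 2 * (norm z)^2" using d1(2)[of z] z by (simp add: d_def T_def)
      have b2: "norm (F z - Pe) \<le> C * norm z ^ 3" using C(2)[of z] z by (simp add: d_def Pe_def)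
      have "C * norm z \<le> \<bar>C\<bar> * norm z" by (simp add: mult_right_mono)
      also have "\<dots> \<le> (\<bar>C\<bar> + 1) * (e / (2 * (\<bar>C\<bar> + 1)))"
        using z by (intro mult_mono) (auto simp: d_def)
      also have "\<dots> = e / 2" by (simp add: field_simps)
      finally have "C * norm z \<le> e / 2" .
      then have b3: "C * norm z ^ 3 \<le> e / 2 * (norm z)^2"
        using mult_right_mono[of "C * norm z" "e/2" "(norm z)^2"] by (simp add: power3_eq_cube power2_eq_square mult.assoc)
      have "norm ((F z - Pe) - (F z - T)) \<le> norm (F z - Pe) + norm (F z - T)" by (rule norm_triangle_ineq4)
      also have "\<dots> \<le> e * (norm z)^2" using b1 b2 b3 by linarith
      finally show "norm ((F 0 - c0) + (wirt_zb F 0 - c1) * cnj z + (wirt_z F 0 - c2) * z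
       + (wirt_z (wirt_z F) 0 / 2 - c3) * (z * z) + (wirt_zb (wirt_zb F) 0 / 2 - c4) * (cnj z * cnj z)
       + (wirt_zb (wirt_z F) 0 - c5) * (z * cnj z)) \<le> e * (norm z)^2" unfolding eq .
    qed
  qed
  have sF: "wirt_zb (wirt_z F) 0 = wirt_z (wirt_zb F) 0"
    by (rule wirt_sym[OF S_open S0 dF]) (use dFz dFzb S0 in auto)
  have dL: "(L has_derivative (\<lambda>v. (wirt_z H y / H y) * v + (wirt_zb H y / H y) * cnj v)) (at y)"
    if y: "y \<in> S" for y
    unfolding L_def H_def by (rule wirt_ln[OF S_open y]) (use h_pos dH y in \<open>auto simp: H_def\<close>)
  have Lz: "wirt_z L y = - F y" if y: "y \<in> S" for y
    using wirt_unique(1)[OF dL[OF y]] by (simp add: F_def)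
  have dLd: "L differentiable (at y)" if "y \<in> S" for y using dL[OF that] unfolding differentiable_def by blast
  have Lzb: "wirt_zb L y = - cnj (F y)" if y: "y \<in> S" for y
    using real_wirt[OF S_open y _ dLd[OF y]] Lz[OF y] by (simp add: L_def)
  have e1: "wirt_zb (wirt_z L) y = - wirt_zb F y" if y: "y \<in> S" for y
  proof -
    have "wirt_zb (wirt_z L) y = wirt_zb (\<lambda>x. - F x) y"
      by (rule wirt_local(2)[OF S_open y]) (rule Lz)
    also have "\<dots> = - wirt_zb F y" using wirt_neg(2) dF y by blast
    finally show ?thesis .
  qed
  have e2: "wirt_z (wirt_zb (wirt_z L)) 0 = - wirt_z (wirt_zb F) 0"
  proof -
    have "wirt_z (wirt_zb (wirt_z L)) 0 = wirt_z (\<lambda>x. - wirt_zb F x) 0"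
      by (rule wirt_local(1)[OF S_open S0]) (rule e1)
    also have "\<dots> = - wirt_z (wirt_zb F) 0" using wirt_neg(1) dFzb S0 by blast
    finally show ?thesis .
  qed
  have Qv: "wirt_z L 0 * wirt_zb (wirt_z L) 0 - wirt_z (wirt_zb (wirt_z L)) 0 = 0"
    using Q unfolding intrinsic_vanishing_at0_def Let_def L_def .
  then have Qv': "F 0 * wirt_zb F 0 + wirt_z (wirt_zb F) 0 = 0"
    using Lz[OF S0] e1[OF S0] e2 by simp
  have c5': "c5 + c0 * c1 = 0" using coef sF Qv' by (simp add: add.commute)
  have "c5 = (c5 + c0 * c1) - c0 * c1" by simp
  then have c5: "c5 = - c0 * c1" using c5' by simp
  have realFzb: "cnj (wirt_zb F y) = wirt_zb F y" if y: "y \<in> S" for y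
  proof -
    have dcF: "(\<lambda>x. cnj (F x)) differentiable (at y)"
      using dF y unfolding differentiable_def using has_derivative_cnj by blast
    have d1: "wirt_z L differentiable (at y)"
      by (rule diff_local[OF S_open y, of "\<lambda>x. - F x"]) (use Lz dF y in auto)
    have d2: "wirt_zb L differentiable (at y)"
      by (rule diff_local[OF S_open y, of "\<lambda>x. - cnj (F x)"]) (use Lzb dcF in auto)
    have "wirt_zb (wirt_z L) y = wirt_z (wirt_zb L) y"
      by (rule wirt_sym[OF S_open y _ d1 d2]) (use dLd in auto)
    also have "\<dots> = wirt_z (\<lambda>x. - cnj (F x)) y"
      by (rule wirt_local(1)[OF S_open y]) (rule Lzb)
    also have "\<dots> = - cnj (wirt_zb F y)"
      using wirt_neg(1)[OF dcF] wirt_cnj(1) dF y by simp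
    finally show ?thesis using e1[OF y] by simp
  qed
  have Fzbzb: "wirt_zb (wirt_zb F) 0 = cnj (wirt_z (wirt_zb F) 0)"
    by (rule real_wirt[OF S_open S0]) (use realFzb dFzb S0 in auto)
  have c1r: "cnj c1 = c1" using realFzb[OF S0] coef by simp
  have ca: "wirt_zb (wirt_zb F) 0 = 2 * c4" using coef by simp
  have cb: "wirt_z (wirt_zb F) 0 = c5" using coef sF by simp
  have "2 * c4 = cnj c5" using Fzbzb ca cb by metis
  then have c4: "c4 = cnj c5 / 2" by (simp add: mult.commute)
  show ?thesis using c5 c4 c1r g1 by (simp add: algebra_simps)
qed


definition Xp :: "complex \<Rightarrow> complex \<Rightarrow> complex \<Rightarrow> complex \<Rightarrow> complex \<Rightarrow> complex" where
  "Xp g1 g2 g3 c1 a = ((-18) * (g2)^2 + (-32) * (g1)*(g3) + (48) * (g1)^2*(g2) + (-16) * (g1)^4 + (-4) * (cnj a)*(g3)*(c1) + (-6) * (cnj a)*(g1)*(g2)*(c1) + (-4) * (cnj a)^2*(g3)*(cnj g1)*(c1) + (-12) * (cnj a)^2*(g1)*(g2)*(cnj g1)*(c1) + (-8) * (cnj a)^3*(g3)*(cnj g2)*(c1) + (-12) * (cnj a)^3*(g1)*(g2)*(cnj g2)*(c1) + (-8) * (cnj a)^4*(g3)*(cnj g3)*(c1) + (-12) * (cnj a)^4*(g1)*(g2)*(cnj g3)*(c1) + (-60) * (a)*(g2)*(g3) + (54) * (a)*(g1)*(g2)^2 + (16) * (a)*(g1)^2*(g3) + (-24) * (a)*(g1)^3*(g2)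 + (-9) * (a)*(cnj a)*(g2)^2*(c1) + (-8) * (a)*(cnj a)*(g1)*(g3)*(c1) + (-9) * (a)*(cnj a)^2*(g2)^2*(cnj g1)*(c1) + (-16) * (a)*(cnj a)^2*(g1)*(g3)*(cnj g1)*(c1) + (-9) * (a)*(cnj a)^3*(g2)^2*(cnj g2)*(c1) + (-16) * (a)*(cnj a)^3*(g1)*(g3)*(cnj g2)*(c1) + (-9) * (a)*(cnj a)^4*(g2)^2*(cnj g3)*(c1) + (-16) * (a)*(cnj a)^4*(g1)*(g3)*(cnj g3)*(c1) + (-48) * (a)^2*(g3)^2 + (72) * (a)^2*(g1)*(g2)*(g3) + (-32) * (a)^2*(g1)^3*(g3) + (-24) * (a)^2*(cnj a)*(g2)*(g3)*(c1) + (-24) * (a)^2*(cnj a)^2*(g2)*(g3)*(cnj g1)*(c1) + (-24) * (a)^2*(cnj a)^3*(g2)*(g3)*(cnj g2)*(c1) + (-24) * (a)^2*(cnj a)^4*(g2)*(g3)*(cnj g3)*(c1) + (-16) * (a)^3*(cnj a)*(g3)^2*(c1) + (-16) * (a)^3*(cnj a)^2*(g3)^2*(cnj g1)*(c1) + (-16) * (a)^3*(cnj a)^3*(g3)^2*(cnj g2)*(c1) + (-16) * (a)^3*(cnj a)^4*(g3)^2*(cnj g3)*(c1))"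
definition Yp :: "complex \<Rightarrow> complex \<Rightarrow> complex \<Rightarrow> complex \<Rightarrow> complex \<Rightarrow> complex" where
  "Yp g1 g2 g3 c1 a = ((-3) * (g2)*(c1) + (-3) * (cnj a)*(g2)*(cnj g1)*(c1) + (-4) * (cnj a)*(g1)^2*(cnj g1)*(c1) + (-6) * (cnj a)^2*(g2)*(cnj g2)*(c1) + (-4) * (cnj a)^2*(g1)^2*(cnj g2)*(c1) + (-6) * (cnj a)^3*(g2)*(cnj g3)*(c1) + (-4) * (cnj a)^3*(g1)^2*(cnj g3)*(c1))"
definition Zp :: "complex \<Rightarrow> complex \<Rightarrow> complex \<Rightarrow> complex \<Rightarrow> complex \<Rightarrow> complex" where
  "Zp g1 g2 g3 c1 a = ((-2) * (g1)*(cnj g1)*(c1) + (-4) * (cnj a)*(g1)*(cnj g2)*(c1) + (-4) * (cnj a)^2*(g1)*(cnj g3)*(c1))"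
definition Wp :: "complex \<Rightarrow> complex \<Rightarrow> complex \<Rightarrow> complex \<Rightarrow> complex \<Rightarrow> complex" where
  "Wp g1 g2 g3 c1 a = ((-1) * (cnj g2)*(c1) + (-1) * (cnj a)*(cnj g3)*(c1))"

lemma Bident:
  fixes a g1 g2 g3 c1 :: complex
  shows "(1 + 2*g1*a + 3*g2*a^2 + 4*g3*a^3) * ((-2*g1) + c1 * cnj a + (4*g1^2 - 6*g2) * a + (-12*g3 - 8*g1^3 + 18*g1*g2) * a^2 + (c1 * cnj g1) * (cnj a)^2 + (2*g1*c1) * a * cnj a)
    + (2*g1 + 6*g2*a + 12*g3*a^2)
    - c1 * cnj (a + g1 * a^2 + g2 * a^3 + g3 * a^4) * (1 + 2*g1*a + 3*g2*a^2 + 4*g3*a^3)^2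
    = a^3 * Xp g1 g2 g3 c1 a + a^2 * cnj a * Yp g1 g2 g3 c1 a + a * (cnj a)^2 * Zp g1 g2 g3 c1 a + (cnj a)^3 * Wp g1 g2 g3 c1 a"
  unfolding Xp_def Yp_def Zp_def Wp_def
  by (simp only: complex_cnj_add complex_cnj_mult complex_cnj_power) algebra

lemma XYZW_bound:
  "\<exists>K. K \<ge> 0 \<and> (\<forall>a\<in>cball 0 1. norm (Xp g1 g2 g3 c1 a) + norm (Yp g1 g2 g3 c1 a) + norm (Zp g1 g2 g3 c1 a) + norm (Wp g1 g2 g3 c1 a) \<le> K)"
proof -
  let ?f = "\<lambda>a. norm (Xp g1 g2 g3 c1 a) + norm (Yp g1 g2 g3 c1 a) + norm (Zp g1 g2 g3 c1 a) + norm (Wp g1 g2 g3 c1 a)"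
  have "continuous_on (cball 0 1) ?f"
    unfolding Xp_def Yp_def Zp_def Wp_def by (intro continuous_intros)
  then have "compact (?f ` cball 0 1)" by (intro compact_continuous_image) auto
  then have "bounded (?f ` cball 0 1)" by (rule compact_imp_bounded)
  then obtain K where K: "\<forall>y\<in>?f ` cball 0 1. norm y \<le> K" unfolding bounded_iff by blast
  have "\<forall>a\<in>cball 0 1. ?f a \<le> K" using K by auto
  moreover have "K \<ge> 0"
  proof -
    have "norm (?f 0) \<le> K" using K by auto
    then show ?thesis using norm_ge_zero[of "?f 0"] by linarith
  qed
  ultimately show ?thesis by blast
qed

lemma B_bound:
  assumes "norm a \<le> 1" and K: "\<forall>a\<in>cball 0 1. norm (Xp g1 g2 g3 c1 a) + norm (Yp g1 g2 g3 c1 a) + norm (Zp g1 g2 g3 c1 a) + norm (Wp g1 g2 g3 c1 a) \<le> K"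
  shows "norm (a^3 * Xp g1 g2 g3 c1 a + a^2 * cnj a * Yp g1 g2 g3 c1 a + a * (cnj a)^2 * Zp g1 g2 g3 c1 a + (cnj a)^3 * Wp g1 g2 g3 c1 a) \<le> K * norm a ^ 3"
proof -
  have "norm (a^3 * Xp g1 g2 g3 c1 a + a^2 * cnj a * Yp g1 g2 g3 c1 a + a * (cnj a)^2 * Zp g1 g2 g3 c1 a + (cnj a)^3 * Wp g1 g2 g3 c1 a)
     \<le> norm (a^3 * Xp g1 g2 g3 c1 a) + norm (a^2 * cnj a * Yp g1 g2 g3 c1 a) + norm (a * (cnj a)^2 * Zp g1 g2 g3 c1 a) + norm ((cnj a)^3 * Wp g1 g2 g3 c1 a)"
    by (intro order_trans[OF norm_triangle_ineq] add_mono order_refl)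
  also have "\<dots> = norm a ^ 3 * (norm (Xp g1 g2 g3 c1 a) + norm (Yp g1 g2 g3 c1 a) + norm (Zp g1 g2 g3 c1 a) + norm (Wp g1 g2 g3 c1 a))"
    by (simp add: norm_mult norm_power power2_eq_square power3_eq_cube algebra_simps)
  also have "\<dots> \<le> norm a ^ 3 * K" using K assms(1) by (intro mult_left_mono) auto
  finally show ?thesis by (simp add: mult.commute)
qed


lemma part3:
  fixes h :: "complex \<Rightarrow> real" and S :: "complex set"
    and c0 c1 c2 c3 c4 c5 \<gamma>1 \<gamma>2 \<gamma>3 :: complex
  assumes expansion: "\<exists>C \<delta>. \<delta> > 0 \<and> (\<forall>z. norm z < \<delta> \<longrightarrow>
        norm (- wirt_z (\<lambda>z. complex_of_real (h z)) z / complex_of_real (h z)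
              - (c0 + c1 * cnj z + c2 * z + c3 * z\<^sup>2 + c4 * (cnj z)\<^sup>2 + c5 * z * cnj z))
          \<le> C * norm z ^ 3)"
    and n2: "c5 - 2 * \<gamma>1 * c1 = 0" and n3: "c4 - c1 * cnj \<gamma>1 = 0"
    and g1: "\<gamma>1 = - c0 / 2"
    and g2: "c2 + 2 * \<gamma>1 * c0 + 6 * \<gamma>2 = 0"
    and g3: "12 * \<gamma>3 + c3 + 2 * \<gamma>1 * c2 + 3 * \<gamma>2 * c0 = 0"
  shows "\<exists>C \<delta>. \<delta> > 0 \<and> (\<forall>U u. SM_solution h S U u \<longrightarrow>
       (let w = (\<lambda>t x. u t x + \<gamma>1 * (u t x)\<^sup>2 + \<gamma>2 * (u t x) ^ 3 + \<gamma>3 * (u t x) ^ 4) in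
        \<forall>(t,x)\<in>U. norm (u t x) < \<delta> \<longrightarrow>
          norm (\<i> * pt w t x + px (px w) t x - c1 * cnj (w t x) * (px w t x)\<^sup>2)
            \<le> C * norm (w t x) ^ 3 * norm (px w t x) ^ 2))"
proof -
  define F where "F a = - wirt_z (\<lambda>z. complex_of_real (h z)) a / complex_of_real (h a)" for a
  define Pe where "Pe a = c0 + c1 * cnj a + c2 * a + c3 * a\<^sup>2 + c4 * (cnj a)\<^sup>2 + c5 * a * cnj a" for a
  obtain C0 \<delta>0 where C0: "\<delta>0 > 0" "\<And>a. norm a < \<delta>0 \<Longrightarrow> norm (F a - Pe a) \<le> C0 * norm a ^ 3"
    using expansion unfolding F_def Pe_def by blast
  define \<phi> where "\<phi> a = a + \<gamma>1 * a\<^sup>2 + \<gamma>2 * a ^ 3 + \<gamma>3 * a ^ 4" for a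
  define \<phi>1 where "\<phi>1 a = 1 + 2*\<gamma>1*a + 3*\<gamma>2*a^2 + 4*\<gamma>3*a^3" for a
  define \<phi>2 where "\<phi>2 a = 2*\<gamma>1 + 6*\<gamma>2*a + 12*\<gamma>3*a^2" for a
  have d\<phi>: "(\<phi> has_field_derivative \<phi>1 a) (at a)" for a
    unfolding \<phi>_def \<phi>1_def by (auto intro!: derivative_eq_intros)
  have d\<phi>1: "(\<phi>1 has_field_derivative \<phi>2 a) (at a)" for a
    unfolding \<phi>1_def \<phi>2_def by (auto intro!: derivative_eq_intros)
  have c0e: "c0 = -2*\<gamma>1" using g1 by simp
  have c2e: "c2 = 4*\<gamma>1^2 - 6*\<gamma>2" using g2 c0e by algebra
  have c3e: "c3 = -12*\<gamma>3 - 8*\<gamma>1^3 + 18*\<gamma>1*\<gamma>2" using g3 c0e c2e by algebra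
  have c4e: "c4 = c1 * cnj \<gamma>1" using n3 by simp
  have c5e: "c5 = 2*\<gamma>1*c1" using n2 by simp
  define B where "B a = a^3 * Xp \<gamma>1 \<gamma>2 \<gamma>3 c1 a + a^2 * cnj a * Yp \<gamma>1 \<gamma>2 \<gamma>3 c1 a + a * (cnj a)^2 * Zp \<gamma>1 \<gamma>2 \<gamma>3 c1 a + (cnj a)^3 * Wp \<gamma>1 \<gamma>2 \<gamma>3 c1 a" for a
  have Bid: "\<phi>1 a * Pe a + \<phi>2 a - c1 * cnj (\<phi> a) * (\<phi>1 a)^2 = B a" for a
    unfolding \<phi>_def \<phi>1_def \<phi>2_def Pe_def c0e c2e c3e c4e c5e B_def by (rule Bident)
  obtain K where K: "K \<ge> 0" "\<forall>a\<in>cball 0 1. norm (Xp \<gamma>1 \<gamma>2 \<gamma>3 c1 a) + norm (Yp \<gamma>1 \<gamma>2 \<gamma>3 c1 a) + norm (Zp \<gamma>1 \<gamma>2 \<gamma>3 c1 a) + norm (Wp \<gamma>1 \<gamma>2 \<gamma>3 c1 a) \<le> K"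
    using XYZW_bound by blast
  define M1 where "M1 = 2 * norm \<gamma>1 + 3 * norm \<gamma>2 + 4 * norm \<gamma>3"
  define M2 where "M2 = norm \<gamma>1 + norm \<gamma>2 + norm \<gamma>3"
  have M: "M1 \<ge> 0" "M2 \<ge> 0" by (simp_all add: M1_def M2_def)
  define \<delta> where "\<delta> = min \<delta>0 (1 / (2 * (M1 + M2 + 1)))"
  have \<delta>pos: "\<delta> > 0" using C0(1) M by (simp add: \<delta>_def)
  have small: "norm a \<le> 1" "norm a * M1 \<le> 1/2" "norm a * M2 \<le> 1/2" if a: "norm a < \<delta>" for a
  proof -
    have "norm a * (M1 + M2 + 1) \<le> 1/2"
    proof -
      have "norm a \<le> 1 / (2 * (M1 + M2 + 1))" using a by (simp add: \<delta>_def)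
      then show ?thesis using M by (simp add: field_simps)
    qed
    moreover have "norm a * (M1 + M2 + 1) = norm a * M1 + norm a * M2 + norm a" by (simp add: algebra_simps)
    moreover have "norm a * M1 \<ge> 0" "norm a * M2 \<ge> 0" using M by simp_all
    ultimately show "norm a \<le> 1" "norm a * M1 \<le> 1/2" "norm a * M2 \<le> 1/2"
      using norm_ge_zero[of a] by linarith+
  qed
  have \<phi>1b: "norm (\<phi>1 a - 1) \<le> 1/2" if a: "norm a < \<delta>" for a
  proof -
    note s = small[OF a]
    have "norm (2*\<gamma>1 + 3*\<gamma>2*a + 4*\<gamma>3*a^2) \<le> norm (2*\<gamma>1) + norm (3*\<gamma>2*a) + norm (4*\<gamma>3*a^2)"
      by (intro order_trans[OF norm_triangle_ineq] add_mono order_refl)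
    also have "\<dots> \<le> M1"
    proof -
      have "norm a ^ 2 \<le> 1" using s(1) by (simp add: power_le_one)
      then show ?thesis using s(1) unfolding M1_def
        by (simp add: norm_mult norm_power) (smt (verit, best) mult_left_le mult_nonneg_nonneg norm_ge_zero)
    qed
    finally have "norm a * norm (2*\<gamma>1 + 3*\<gamma>2*a + 4*\<gamma>3*a^2) \<le> norm a * M1" by (simp add: mult_left_mono)
    moreover have "\<phi>1 a - 1 = a * (2*\<gamma>1 + 3*\<gamma>2*a + 4*\<gamma>3*a^2)" by (simp add: \<phi>1_def algebra_simps power2_eq_square power3_eq_cube)
    ultimately show ?thesis using s(2) by (simp add: norm_mult)
  qed
  have \<phi>1lo: "norm (\<phi>1 a) \<ge> 1/2" and \<phi>1hi: "norm (\<phi>1 a) \<le> 3/2" if a: "norm a < \<delta>" for a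
  proof -
    have "1 - norm (\<phi>1 a) \<le> norm (\<phi>1 a - 1)" using norm_triangle_ineq2[of 1 "\<phi>1 a"] by (simp add: norm_minus_commute)
    moreover have "norm (\<phi>1 a) - 1 \<le> norm (\<phi>1 a - 1)" using norm_triangle_ineq2[of "\<phi>1 a" 1] by simp
    ultimately show "norm (\<phi>1 a) \<ge> 1/2" "norm (\<phi>1 a) \<le> 3/2" using \<phi>1b[OF a] by linarith+
  qed
  have \<phi>lo: "norm a \<le> 2 * norm (\<phi> a)" if a: "norm a < \<delta>" for a
  proof -
    note s = small[OF a]
    have "norm (\<gamma>1 + \<gamma>2*a + \<gamma>3*a^2) \<le> norm \<gamma>1 + norm (\<gamma>2*a) + norm (\<gamma>3*a^2)"
      by (intro order_trans[OF norm_triangle_ineq] add_mono order_refl)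
    also have "\<dots> \<le> M2"
    proof -
      have "norm a ^ 2 \<le> 1" using s(1) by (simp add: power_le_one)
      then show ?thesis using s(1) unfolding M2_def
        by (simp add: norm_mult norm_power) (smt (verit, best) mult_left_le mult_nonneg_nonneg norm_ge_zero)
    qed
    finally have "norm a * norm (\<gamma>1 + \<gamma>2*a + \<gamma>3*a^2) \<le> norm a * M2" by (simp add: mult_left_mono)
    then have "norm a * (norm a * norm (\<gamma>1 + \<gamma>2*a + \<gamma>3*a^2)) \<le> norm a * (1/2)"
      using s(3) by (smt (verit, best) mult_left_mono norm_ge_zero)
    moreover have "\<phi> a - a = a * (a * (\<gamma>1 + \<gamma>2*a + \<gamma>3*a^2))" by (simp add: \<phi>_def algebra_simps power2_eq_square power3_eq_cube power4_eq_xxxx)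
    ultimately have "norm (\<phi> a - a) \<le> norm a / 2" by (simp add: norm_mult)
    then show ?thesis using norm_triangle_ineq2[of a "\<phi> a"] by (simp add: norm_minus_commute)
  qed
  define Cf where "Cf = 32 * (2 * \<bar>C0\<bar> + K)"
  have wfun: "(\<lambda>t x. u t x + \<gamma>1 * (u t x)\<^sup>2 + \<gamma>2 * (u t x) ^ 3 + \<gamma>3 * (u t x) ^ 4) = (\<lambda>t x. \<phi> (u t x))" for u :: "real \<Rightarrow> real \<Rightarrow> complex"
    by (simp add: \<phi>_def)
  have main: "norm (\<i> * pt (\<lambda>t x. \<phi> (u t x)) t x + px (px (\<lambda>t x. \<phi> (u t x))) t x
        - c1 * cnj (\<phi> (u t x)) * (px (\<lambda>t x. \<phi> (u t x)) t x)\<^sup>2)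
      \<le> Cf * norm (\<phi> (u t x)) ^ 3 * norm (px (\<lambda>t x. \<phi> (u t x)) t x) ^ 2"
    if SM: "SM_solution h S U u" and tx: "(t, x) \<in> U" and ua: "norm (u t x) < \<delta>" for U u t x
  proof -
    have oU: "open U" using SM by (simp add: SM_solution_def)
    have SMp: "\<And>t x. (t, x) \<in> U \<Longrightarrow> (\<lambda>s. u s x) differentiable (at t) \<and> (\<lambda>y. u t y) differentiable (at x)
      \<and> (\<lambda>y. px u t y) differentiable (at x)
      \<and> \<i> * pt u t x + px (px u) t x
          = - (wirt_z (\<lambda>z. complex_of_real (h z)) (u t x) / complex_of_real (h (u t x))) * (px u t x)\<^sup>2"
      using SM unfolding SM_solution_def by fast
    note P = SMp[OF tx]
    define a where "a = u t x"
    define p where "p = px u t x"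
    define q where "q = pt u t x"
    define r where "r = px (px u) t x"
    have eqn: "\<i> * q + r = F a * p\<^sup>2" using P by (simp add: a_def p_def q_def r_def F_def)
    obtain e where e: "e > 0" "ball (t, x) e \<subseteq> U" using oU tx open_contains_ball by blast
    have nearU: "(t, y) \<in> U" if "y \<in> ball x e" for y
    proof -
      have "dist (t, x) (t, y) = dist x y" by (simp add: dist_Pair_Pair)
      then show ?thesis using e that by (auto simp: dist_commute)
    qed
    have vt: "((\<lambda>s. u s x) has_vector_derivative q) (at t)"
      using P vector_derivative_works unfolding q_def pt_def by blast
    have ptw: "pt (\<lambda>t x. \<phi> (u t x)) t x = q * \<phi>1 a"
    proof -
      have "((\<phi> \<circ> (\<lambda>s. u s x)) has_vector_derivative (q * \<phi>1 a)) (at t)"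
        using field_vector_diff_chain_at[OF vt d\<phi>] by (simp add: a_def)
      then show ?thesis unfolding pt_def by (simp add: o_def vector_derivative_at)
    qed
    have pxw: "px (\<lambda>t x. \<phi> (u t x)) t y = px u t y * \<phi>1 (u t y)" if y: "y \<in> ball x e" for y
    proof -
      have "((\<lambda>y. u t y) has_vector_derivative px u t y) (at y)"
        using SMp[OF nearU[OF y]] vector_derivative_works unfolding px_def by blast
      then have "((\<phi> \<circ> (\<lambda>y. u t y)) has_vector_derivative (px u t y * \<phi>1 (u t y))) (at y)"
        using field_vector_diff_chain_at d\<phi> by blast
      then show ?thesis unfolding px_def[of "\<lambda>t x. \<phi> (u t x)"] by (simp add: o_def vector_derivative_at)
    qed
    have pxw0: "px (\<lambda>t x. \<phi> (u t x)) t x = p * \<phi>1 a"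
      using pxw[of x] e by (simp add: p_def a_def)
    have pxxw: "px (px (\<lambda>t x. \<phi> (u t x))) t x = p * (p * \<phi>2 a) + r * \<phi>1 a"
    proof -
      have vx: "((\<lambda>y. u t y) has_vector_derivative p) (at x)"
        using P vector_derivative_works unfolding p_def px_def by blast
      have h1: "((\<lambda>y. \<phi>1 (u t y)) has_vector_derivative (p * \<phi>2 a)) (at x)"
        using field_vector_diff_chain_at[OF vx d\<phi>1] by (simp add: a_def o_def)
      have h2: "((\<lambda>y. px u t y) has_vector_derivative r) (at x)"
        using P vector_derivative_works unfolding r_def px_def[of "px u"] by blast
      have "((\<lambda>y. px u t y * \<phi>1 (u t y)) has_vector_derivative (p * (p * \<phi>2 a) + r * \<phi>1 a)) (at x)"
        using has_vector_derivative_mult[OF h2 h1] by (simp add: p_def a_def)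
      then have "((\<lambda>y. px (\<lambda>t x. \<phi> (u t x)) t y) has_vector_derivative (p * (p * \<phi>2 a) + r * \<phi>1 a)) (at x)"
        by (rule has_vector_derivative_transform_within_open[where S="ball x e"]) (use e pxw in auto)
      then show ?thesis unfolding px_def[of "px (\<lambda>t x. \<phi> (u t x))"] by (simp add: vector_derivative_at)
    qed
    have E: "\<i> * pt (\<lambda>t x. \<phi> (u t x)) t x + px (px (\<lambda>t x. \<phi> (u t x))) t x
        - c1 * cnj (\<phi> (u t x)) * (px (\<lambda>t x. \<phi> (u t x)) t x)\<^sup>2
       = (\<phi>1 a * (F a - Pe a) + B a) * p\<^sup>2"
    proof -
      have "\<i> * (q * \<phi>1 a) + (p * (p * \<phi>2 a) + r * \<phi>1 a) - c1 * cnj (\<phi> a) * (p * \<phi>1 a)\<^sup>2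
          = \<phi>1 a * (\<i> * q + r) + (\<phi>2 a - c1 * cnj (\<phi> a) * (\<phi>1 a)\<^sup>2) * p\<^sup>2"
        by (simp add: algebra_simps power2_eq_square)
      also have "\<dots> = (\<phi>1 a * (F a - Pe a) + (\<phi>1 a * Pe a + \<phi>2 a - c1 * cnj (\<phi> a) * (\<phi>1 a)^2)) * p\<^sup>2"
        unfolding eqn by (simp add: algebra_simps)
      also have "\<dots> = (\<phi>1 a * (F a - Pe a) + B a) * p\<^sup>2" unfolding Bid ..
      finally show ?thesis unfolding ptw pxxw pxw0 a_def[symmetric] .
    qed
    have aa: "norm a < \<delta>" using ua by (simp add: a_def)
    have a1: "norm a \<le> 1" using small[OF aa] by simp
    have a0: "norm a < \<delta>0" using aa by (simp add: \<delta>_def)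
    have bF: "norm (F a - Pe a) \<le> \<bar>C0\<bar> * norm a ^ 3"
      using C0(2)[OF a0] by (smt (verit, best) abs_ge_self mult_right_mono norm_ge_zero zero_le_power)
    have bB: "norm (B a) \<le> K * norm a ^ 3" unfolding B_def by (rule B_bound[OF a1 K(2)])
    have "norm (\<phi>1 a * (F a - Pe a) + B a) \<le> norm (\<phi>1 a) * norm (F a - Pe a) + norm (B a)"
      using norm_triangle_ineq[of "\<phi>1 a * (F a - Pe a)" "B a"] by (simp add: norm_mult)
    also have "\<dots> \<le> 2 * (\<bar>C0\<bar> * norm a ^ 3) + K * norm a ^ 3"
    proof -
      have "norm (\<phi>1 a) * norm (F a - Pe a) \<le> 2 * (\<bar>C0\<bar> * norm a ^ 3)"
        by (rule mult_mono) (use \<phi>1hi[OF aa] bF in auto)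
      then show ?thesis using bB by linarith
    qed
    also have "\<dots> = (2 * \<bar>C0\<bar> + K) * norm a ^ 3" by (simp add: algebra_simps)
    finally have b1: "norm (\<phi>1 a * (F a - Pe a) + B a) \<le> (2 * \<bar>C0\<bar> + K) * norm a ^ 3" .
    have na: "norm a ^ 3 \<le> 8 * norm (\<phi> a) ^ 3"
    proof -
      have "norm a ^ 3 \<le> (2 * norm (\<phi> a)) ^ 3" using \<phi>lo[OF aa] by (intro power_mono) auto
      then show ?thesis by (simp add: power_mult_distrib)
    qed
    have np: "norm p ^ 2 \<le> 4 * norm (p * \<phi>1 a) ^ 2"
    proof -
      have "norm p * 1 \<le> norm p * (2 * norm (\<phi>1 a))"
        by (rule mult_left_mono) (use \<phi>1lo[OF aa] in auto)
      then have "norm p \<le> 2 * norm (p * \<phi>1 a)" by (simp add: norm_mult algebra_simps)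
      then have "norm p ^ 2 \<le> (2 * norm (p * \<phi>1 a)) ^ 2" by (intro power_mono) auto
      then show ?thesis by (simp add: power_mult_distrib)
    qed
    have cpos: "2 * \<bar>C0\<bar> + K \<ge> 0" using K(1) by simp
    have "norm ((\<phi>1 a * (F a - Pe a) + B a) * p\<^sup>2) \<le> (2 * \<bar>C0\<bar> + K) * norm a ^ 3 * norm p ^ 2"
      using b1 by (simp add: norm_mult norm_power mult_right_mono)
    also have "\<dots> \<le> (2 * \<bar>C0\<bar> + K) * (8 * norm (\<phi> a) ^ 3) * (4 * norm (p * \<phi>1 a) ^ 2)"
      using na np cpos by (intro mult_mono) auto
    also have "\<dots> = Cf * norm (\<phi> a) ^ 3 * norm (p * \<phi>1 a) ^ 2" by (simp add: Cf_def)
    finally have fin: "norm ((\<phi>1 a * (F a - Pe a) + B a) * p\<^sup>2) \<le> Cf * norm (\<phi> a) ^ 3 * norm (p * \<phi>1 a) ^ 2" .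
    show ?thesis unfolding E unfolding pxw0 unfolding a_def[symmetric] using fin .
  qed
  show ?thesis
    apply (rule exI[of _ Cf], rule exI[of _ \<delta>])
    unfolding Let_def wfun using \<delta>pos main by auto
qed

theorem corollary5p1:
  fixes h :: "complex \<Rightarrow> real" and S :: "complex set"
    and c0 c1 c2 c3 c4 c5 \<gamma>1 \<gamma>2 \<gamma>3 :: complex
  assumes S_open: "open S" and S0: "0 \<in> S"
    and h_pos: "\<forall>z\<in>S. h z > 0"
    and h_smooth: "smooth_on S (\<lambda>z. complex_of_real (h z))"
    and Q: "intrinsic_vanishing_at0 h"
    and expansion: "\<exists>C \<delta>. \<delta> > 0 \<and> (\<forall>z. norm z < \<delta> \<longrightarrow>
        norm (- wirt_z (\<lambda>z. complex_of_real (h z)) z / complex_of_real (h z)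
              - (c0 + c1 * cnj z + c2 * z + c3 * z\<^sup>2 + c4 * (cnj z)\<^sup>2 + c5 * z * cnj z))
          \<le> C * norm z ^ 3)"
    and g1: "\<gamma>1 = - c0 / 2"
    and g2: "c2 + 2 * \<gamma>1 * c0 + 6 * \<gamma>2 = 0"
    and g3: "12 * \<gamma>3 + c3 + 2 * \<gamma>1 * c2 + 3 * \<gamma>2 * c0 = 0"
  shows "c5 - 2 * \<gamma>1 * c1 = 0 \<and> c4 - c1 * cnj \<gamma>1 = 0 \<and>
    (\<exists>C \<delta>. \<delta> > 0 \<and> (\<forall>U u. SM_solution h S U u \<longrightarrow>
       (let w = (\<lambda>t x. u t x + \<gamma>1 * (u t x)\<^sup>2 + \<gamma>2 * (u t x) ^ 3 + \<gamma>3 * (u t x) ^ 4) in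
        \<forall>(t,x)\<in>U. norm (u t x) < \<delta> \<longrightarrow>
          norm (\<i> * pt w t x + px (px w) t x - c1 * cnj (w t x) * (px w t x)\<^sup>2)
            \<le> C * norm (w t x) ^ 3 * norm (px w t x) ^ 2)))"
proof -
  have nu: "c5 - 2 * \<gamma>1 * c1 = 0 \<and> c4 - c1 * cnj \<gamma>1 = 0"
    by (rule nu_zero[OF S_open S0 h_pos h_smooth Q expansion g1])
  have p3: "\<exists>C \<delta>. \<delta> > 0 \<and> (\<forall>U u. SM_solution h S U u \<longrightarrow>
       (let w = (\<lambda>t x. u t x + \<gamma>1 * (u t x)\<^sup>2 + \<gamma>2 * (u t x) ^ 3 + \<gamma>3 * (u t x) ^ 4) in
        \<forall>(t,x)\<in>U. norm (u t x) < \<delta> \<longrightarrow>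
          norm (\<i> * pt w t x + px (px w) t x - c1 * cnj (w t x) * (px w t x)\<^sup>2)
            \<le> C * norm (w t x) ^ 3 * norm (px w t x) ^ 2))"
    by (rule part3[OF expansion _ _ g1 g2 g3]) (use nu in auto)
  show ?thesis using nu p3 by blast
qed

end
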